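(* Let $d \geq 2$ and $n$ be positive integers. Let $\mathcal{S}_{n,d}$ be the family of all maximal spherical sets of $[n]^d$. Then the VC-dimension of the set system $([n]^d, \mathcal{S}_{n,d})$ is at most $d+1$.
   Context: $[n]=\{1,\dots,n\}$. A sphere is a $(d-1)$-dimensional sphere in $\mathbb{R}^d$. A subset $A \subset [n]^d$ is a maximal spherical set of $[n]^d$ if all points of $A$ lie on a single sphere $S$ in $\mathbb{R}^d$ and no point of $[n]^d$ can be added to $A$ while keeping all points on $S$ (i.e. $A = S \cap [n]^d$ for some sphere $S$). For a set system $\mathcal{F}$ on ground set $P$, a set $T \subset P$ is shattered if for every $B \subset T$ there is $F \in \mathcal{F}$ with $F \cap T = B$; the VC-dimension is the largest size of a shattered subset of $P$. *)

theory Defs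
  imports "HOL-Analysis.Analysis"
begin

definition grid :: "nat \<Rightarrow> (real ^ 'd) set" where
  "grid n = {x. \<forall>i. \<exists>k::nat. 1 \<le> k \<and> k \<le> n \<and> x $ i = real k}"

definition is_sphere :: "(real ^ 'd) set \<Rightarrow> bool" where
  "is_sphere S \<longleftrightarrow> (\<exists>c r. r > 0 \<and> S = sphere c r)"

definition maximal_spherical_sets :: "nat \<Rightarrow> (real ^ 'd) set set" where
  "maximal_spherical_sets n = {A. \<exists>S. is_sphere S \<and> A = S \<inter> grid n}"

definition shatters :: "'a set set \<Rightarrow> 'a set \<Rightarrow> bool" where
  "shatters F T \<longleftrightarrow> (\<forall>B \<subseteq> T. \<exists>X \<in> F. X \<inter> T = B)"

definition vc_dim_le :: "'a set \<Rightarrow> 'a set set \<Rightarrow> nat \<Rightarrow> bool" where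
  "vc_dim_le P F k \<longleftrightarrow> (\<forall>T \<subseteq> P. shatters F T \<longrightarrow> finite T \<and> card T \<le> k)"

end

theory Submission
  imports Defs
begin

lemma dist_sq_diff:
  fixes c c0 x :: "real ^ 'd"
  shows "(dist c x)^2 - (dist c0 x)^2 = 2 * inner (c0 - c) x + (inner c c - inner c0 c0)"
  unfolding dist_norm power2_norm_eq_inner
  by (simp add: inner_diff_left inner_diff_right inner_commute algebra_simps)

lemma aux1: "(A::real) - B = 2 * y + K \<Longrightarrow> y = (A - B - K) / 2"
  by simp

lemma aux2: "(y::real) = (A - B - K) / 2 \<Longrightarrow> D - B = 2 * y + K \<Longrightarrow> D = A"
  by simp

lemma no_shatter_big:
  fixes T :: "(real ^ 'd) set"
  assumes fin: "finite T" and cardT: "card T = CARD('d) + 2"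
    and sh: "shatters (maximal_spherical_sets n) T"
  shows False
proof -
  have "affine_dependent T"
    using affine_dependent_biggerset[of T] fin cardT by simp
  then obtain q where qT: "q \<in> T" and qh: "q \<in> affine hull (T - {q})"
    unfolding affine_dependent_def by blast
  obtain X0 where X0: "X0 \<in> maximal_spherical_sets n" "X0 \<inter> T = T"
    using sh unfolding shatters_def by blast
  then obtain S0 where spS0: "is_sphere S0" and X0S: "X0 = S0 \<inter> grid n"
    unfolding maximal_spherical_sets_def by blast
  from spS0 obtain c0 r0 where r0: "r0 > 0" and S0eq: "S0 = sphere c0 r0"
    unfolding is_sphere_def by blast
  have X0eq: "X0 = sphere c0 r0 \<inter> grid n" unfolding X0S S0eq by (rule refl)
  have TS0: "T \<subseteq> sphere c0 r0" using X0 X0eq by blast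
  obtain X where X: "X \<in> maximal_spherical_sets n" "X \<inter> T = T - {q}"
  proof -
    have "T - {q} \<subseteq> T" by blast
    then show ?thesis using sh that unfolding shatters_def by blast
  qed
  then obtain S where spS: "is_sphere S" and XS: "X = S \<inter> grid n"
    unfolding maximal_spherical_sets_def by blast
  from spS obtain c r where r: "r > 0" and Seq: "S = sphere c r"
    unfolding is_sphere_def by blast
  have Xeq: "X = sphere c r \<inter> grid n" unfolding XS Seq by (rule refl)
  define b where "b = (r^2 - r0^2 - (inner c c - inner c0 c0)) / 2"
  define H where "H = {x. inner (c0 - c) x = b}"
  have "T - {q} \<subseteq> H"
  proof
    fix x assume xB: "x \<in> T - {q}"
    then have "x \<in> X \<inter> T" using X(2) by (simp only:)
    then have "x \<in> sphere c r" unfolding Xeq by (rule IntD1[OF IntD1])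
    then have "dist c x = r" by (simp only: mem_sphere)
    moreover have "dist c0 x = r0"
    proof -
      have "x \<in> sphere c0 r0" using xB TS0 by blast
      then show ?thesis by (simp only: mem_sphere)
    qed
    ultimately have e: "r^2 - r0^2 = 2 * inner (c0 - c) x + (inner c c - inner c0 c0)"
      using dist_sq_diff[of c x c0] by (simp only:)
    show "x \<in> H" unfolding H_def b_def mem_Collect_eq using e by (rule aux1)
  qed
  then have "affine hull (T - {q}) \<subseteq> H"
  proof (rule hull_minimal)
    show "affine H" unfolding H_def by (rule affine_hyperplane)
  qed
  then have qH: "q \<in> H" using qh by (rule subsetD)
  have "q \<in> sphere c0 r0" using TS0 qT by (rule subsetD)
  then have "dist c0 q = r0" by (simp only: mem_sphere)
  then have e2: "(dist c q)^2 - r0^2 = 2 * inner (c0 - c) q + (inner c c - inner c0 c0)"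
    using dist_sq_diff[of c q c0] by (simp only:)
  have "inner (c0 - c) q = b" using qH unfolding H_def by (simp only: mem_Collect_eq)
  then have "(dist c q)^2 = r^2"
    using e2 unfolding b_def by (rule aux2)
  then have "dist c q = r" using r zero_le_dist[of c q]
    by (simp add: power2_eq_iff_nonneg)
  then have qS: "q \<in> sphere c r" by (simp only: mem_sphere)
  have "q \<in> X0 \<inter> T" using X0(2) qT by (simp only:)
  then have "q \<in> grid n" unfolding X0eq by (rule IntD2[OF IntD1])
  with qS have "q \<in> X" unfolding Xeq by (rule IntI)
  then have "q \<in> X \<inter> T" using qT by (rule IntI)
  then have "q \<in> T - {q}" using X(2) by (simp only:)
  then show False by blast
qed

lemma shatters_mono:
  assumes "shatters F T" "T' \<subseteq> T"
  shows "shatters F T'"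
  unfolding shatters_def
proof (intro allI impI)
  fix B assume B: "B \<subseteq> T'"
  then have "B \<subseteq> T" using assms(2) by (rule order_trans)
  then obtain X where X: "X \<in> F" "X \<inter> T = B"
    using assms(1) unfolding shatters_def by blast
  have "X \<inter> T' = B"
  proof -
    have "X \<inter> T' = (X \<inter> T) \<inter> T'" using assms(2) by blast
    also have "\<dots> = B \<inter> T'" using X(2) by (simp only:)
    also have "\<dots> = B" using B by blast
    finally show ?thesis .
  qed
  with X(1) show "\<exists>X\<in>F. X \<inter> T' = B" by blast
qed

lemma big_subset:
  fixes T :: "'a set"
  assumes "\<not> (finite T \<and> card T \<le> m + 1)"
  obtains T' where "T' \<subseteq> T" "finite T'" "card T' = m + 2"
proof (cases "finite T")
  case True
  then have "m + 2 \<le> card T" using assms by simp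
  then obtain T' where "T' \<subseteq> T" "card T' = m + 2"
    by (rule obtain_subset_with_card_n)
  moreover have "finite T'" using calculation(1) True by (rule finite_subset)
  ultimately show ?thesis using that by blast
next
  case False
  then obtain T' where "T' \<subseteq> T" "finite T'" "card T' = m + 2"
    using infinite_arbitrarily_large by blast
  then show ?thesis using that by blast
qed

theorem lemma2p2:
  fixes n :: nat
  assumes "CARD('d::finite) \<ge> 2" and "n \<ge> 1"
  shows "vc_dim_le (grid n :: (real ^ 'd) set) (maximal_spherical_sets n) (CARD('d) + 1)"
  unfolding vc_dim_le_def
proof (intro allI impI)
  fix T :: "(real ^ 'd) set"
  assume "T \<subseteq> grid n" and sh: "shatters (maximal_spherical_sets n) T"
  show "finite T \<and> card T \<le> CARD('d) + 1"
  proof (rule ccontr)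
    assume "\<not> (finite T \<and> card T \<le> CARD('d) + 1)"
    then obtain T' where T': "T' \<subseteq> T" "finite T'" "card T' = CARD('d) + 2"
      by (rule big_subset)
    have "shatters (maximal_spherical_sets n) T'" using sh T'(1) by (rule shatters_mono)
    then show False using no_shatter_big T'(2,3) by blast
  qed
qed

end
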